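(* If $p,q\in\mathbf P(S)$ for a DRC-semigroup $S$, then the following are equivalent: (i) $pq=qp$; (ii) $p\theta_q=q\theta_p$ and $p\delta_q=q\delta_p$; (iii) $p\theta_q=q\theta_p=p\delta_q=q\delta_p$; (iv) $p\theta_q=q\theta_p=p\delta_q=q\delta_p=pq=qp$.
   Context: A DRC-semigroup is $(S,\cdot,D,R)$, $(S,\cdot)$ a semigroup, $D,R:S\to S$ with, for all $a,b$: $D(a)a=a$, $aR(a)=a$; $D(ab)=D(aD(b))$, $R(ab)=R(R(a)b)$; $D(ab)=D(a)D(ab)D(a)$, $R(ab)=R(b)R(ab)R(b)$; $R(D(a))=D(a)$, $D(R(a))=R(a)$. $\mathbf P(S)=\{D(a):a\in S\}$, and for $p,q\in\mathbf P(S)$: $q\theta_p=R(qp)$, $q\delta_p=D(pq)$. *)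

theory Defs
  imports Main
begin

definition drc_semigroup :: "('a \<Rightarrow> 'a \<Rightarrow> 'a) \<Rightarrow> ('a \<Rightarrow> 'a) \<Rightarrow> ('a \<Rightarrow> 'a) \<Rightarrow> bool" where
  "drc_semigroup m D R \<longleftrightarrow>
     (\<forall>a b c. m (m a b) c = m a (m b c)) \<and>
     (\<forall>a. m (D a) a = a) \<and> (\<forall>a. m a (R a) = a) \<and>
     (\<forall>a b. D (m a b) = D (m a (D b))) \<and> (\<forall>a b. R (m a b) = R (m (R a) b)) \<and>
     (\<forall>a b. D (m a b) = m (m (D a) (D (m a b))) (D a)) \<and>
     (\<forall>a b. R (m a b) = m (m (R b) (R (m a b))) (R b)) \<and>
     (\<forall>a. R (D a) = D a) \<and> (\<forall>a. D (R a) = R a)"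

definition projections :: "('a \<Rightarrow> 'a) \<Rightarrow> 'a set" where
  "projections D = {D a | a. True}"

definition theta :: "('a \<Rightarrow> 'a \<Rightarrow> 'a) \<Rightarrow> ('a \<Rightarrow> 'a) \<Rightarrow> 'a \<Rightarrow> 'a \<Rightarrow> 'a" where
  "theta m R q p = R (m q p)"

definition delta :: "('a \<Rightarrow> 'a \<Rightarrow> 'a) \<Rightarrow> ('a \<Rightarrow> 'a) \<Rightarrow> 'a \<Rightarrow> 'a \<Rightarrow> 'a" where
  "delta m D q p = D (m p q)"

end

theory Submission
  imports Defs
begin

lemma proj_facts:
  assumes S: "drc_semigroup m D R" and p: "p \<in> projections D"
  shows "D p = p" "R p = p" "m p p = p"
proof -
  obtain x where px: "p = D x" using p unfolding projections_def by blast
  have RD: "\<And>a. R (D a) = D a" and DR: "\<And>a. D (R a) = R a"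
    using S unfolding drc_semigroup_def by blast+
  show Dp: "D p = p" using px DR RD by metis
  show "R p = p" using px RD by simp
  have "m (D p) p = p" using S unfolding drc_semigroup_def by blast
  thus "m p p = p" using Dp by simp
qed

lemma absorb:
  assumes S: "drc_semigroup m D R" and pp: "m p p = p" and e: "e = m (m p e) p"
  shows "m p e = e" "m e p = e"
proof -
  have A: "\<And>a b c. m (m a b) c = m a (m b c)" using S unfolding drc_semigroup_def by blast
  have "m p e = m p (m (m p e) p)" using e by simp
  also have "\<dots> = m (m p p) (m e p)" using A by simp
  also have "\<dots> = e" using pp e A by simp
  finally show "m p e = e" .
  have "m e p = m (m (m p e) p) p" using e by simp
  also have "\<dots> = m (m p e) (m p p)" using A by simp
  also have "\<dots> = e" using pp e A by simp
  finally show "m e p = e" .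
qed

theorem proposition10p1:
  fixes m :: "'a \<Rightarrow> 'a \<Rightarrow> 'a" and D R :: "'a \<Rightarrow> 'a" and p q :: 'a
  assumes "drc_semigroup m D R"
    and "p \<in> projections D" and "q \<in> projections D"
  defines "i \<equiv> m p q = m q p"
    and "ii \<equiv> theta m R p q = theta m R q p \<and> delta m D p q = delta m D q p"
    and "iii \<equiv> theta m R p q = theta m R q p \<and> theta m R q p = delta m D p q
               \<and> delta m D p q = delta m D q p"
    and "iv \<equiv> theta m R p q = theta m R q p \<and> theta m R q p = delta m D p q
               \<and> delta m D p q = delta m D q p \<and> delta m D q p = m p q \<and> m p q = m q p"
  shows "(i \<longleftrightarrow> ii) \<and> (ii \<longleftrightarrow> iii) \<and> (iii \<longleftrightarrow> iv)"
proof -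
  note S = assms(1)
  have A: "\<And>a b c. m (m a b) c = m a (m b c)" using S unfolding drc_semigroup_def by blast
  have DL: "\<And>a. m (D a) a = a" and RL: "\<And>a. m a (R a) = a"
    using S unfolding drc_semigroup_def by blast+
  have D3: "\<And>a b. D (m a b) = m (m (D a) (D (m a b))) (D a)"
   and R3: "\<And>a b. R (m a b) = m (m (R b) (R (m a b))) (R b)"
    using S unfolding drc_semigroup_def by blast+
  note P = proj_facts[OF S assms(2)] and Q = proj_facts[OF S assms(3)]
  have e1: "D (m p q) = m (m p (D (m p q))) p" using D3[of p q] P by simp
  have e2: "D (m q p) = m (m q (D (m q p))) q" using D3[of q p] Q by simp
  have e3: "R (m p q) = m (m q (R (m p q))) q" using R3[of p q] Q by simp
  have e4: "R (m q p) = m (m p (R (m q p))) p" using R3[of q p] P by simp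
  note a1 = absorb[OF S P(3) e1] and a2 = absorb[OF S Q(3) e2]
   and a3 = absorb[OF S Q(3) e3] and a4 = absorb[OF S P(3) e4]
  have key: "m p q = D (m p q) \<and> m q p = D (m p q) \<and> m p q = R (m p q)"
    if r: "R (m p q) = R (m q p)" and d: "D (m q p) = D (m p q)"
  proof -
    have "m p q = m (D (m p q)) (m p q)" using DL by simp
    also have "\<dots> = m (m (D (m p q)) p) q" using A by simp
    also have "\<dots> = m (D (m q p)) q" using a1(2) d by simp
    also have "\<dots> = D (m p q)" using a2(2) d by simp
    finally have x: "m p q = D (m p q)" .
    have "m q p = m (D (m q p)) (m q p)" using DL by simp
    also have "\<dots> = m (m (D (m q p)) q) p" using A by simp
    also have "\<dots> = m (D (m p q)) p" using a2(2) d by simp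
    also have "\<dots> = D (m p q)" using a1(2) by simp
    finally have x': "m q p = D (m p q)" .
    have "m p q = m (m p q) (R (m p q))" using RL by simp
    also have "\<dots> = m p (m q (R (m p q)))" using A by simp
    also have "\<dots> = m p (R (m q p))" using a3(1) r by simp
    also have "\<dots> = R (m p q)" using a4(1) r by simp
    finally have y: "m p q = R (m p q)" .
    show ?thesis using x x' y by blast
  qed
  have ii_iv: "iv" if "ii"
  proof -
    have r: "R (m p q) = R (m q p)" and d: "D (m q p) = D (m p q)"
      using that unfolding ii_def theta_def delta_def by auto
    show ?thesis using key[OF r d] r d unfolding iv_def theta_def delta_def by argo
  qed
  have i_iv: "iv" if "i"
  proof -
    have c: "m p q = m q p" using that unfolding i_def .
    have r: "R (m p q) = R (m q p)" and d: "D (m q p) = D (m p q)" using c by simp_all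
    show ?thesis using key[OF r d] r d unfolding iv_def theta_def delta_def by argo
  qed
  have "iv \<Longrightarrow> iii" "iii \<Longrightarrow> ii" "iv \<Longrightarrow> i" unfolding i_def ii_def iii_def iv_def by auto
  thus ?thesis using ii_iv i_iv by blast
qed

end
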